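(* Let $g:\mathbb{R}^m\to\overline{\mathbb{R}}$ be a polyhedral function and $(\bar z,\bar\lambda)\in\mathrm{gph}\,\partial g$. Then: (a) there exists $r>0$ such that for all $(z,\lambda)\in(\mathrm{gph}\,\partial g)\cap\mathbb{B}_r(\bar z,\bar\lambda)$, $$K_g(z,\lambda)\subset K_g(\bar z,\bar\lambda)-K_g(\bar z,\bar\lambda)\quad\text{and}\quad K_g(\bar z,\bar\lambda)\cap -K_g(\bar z,\bar\lambda)\subset K_g(z,\lambda);$$ (b) if in addition $\bar\lambda\in\mathrm{ri}\,\partial g(\bar z)$, then there exists $r>0$ such that for all $(z,\lambda)\in(\mathrm{gph}\,\partial g)\cap\mathbb{B}_r(\bar z,\bar\lambda)$ we have $\lambda\in\mathrm{ri}\,\partial g(z)$ and $K_g(z,\lambda)=K_g(\bar z,\bar\lambda)$.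
   Context: A proper function $g:\mathbb{R}^m\to\overline{\mathbb{R}}$ is polyhedral if its epigraph is a polyhedral convex set; $\partial g$ is the convex-analysis subdifferential and $\mathrm{ri}$ denotes relative interior. For $z$ with $g(z)$ finite, ${\rm d} g(z)(w)=\liminf_{t\searrow 0,\,w'\to w}\frac{g(z+tw')-g(z)}{t}$, and for $\lambda\in\partial g(z)$ the critical cone is $K_g(z,\lambda)=\{w\mid\langle\lambda,w\rangle={\rm d} g(z)(w)\}$ (equal to $N_{\partial g(z)}(\lambda)$ for convex $g$). $\mathbb{B}_r(\cdot)$ denotes a closed ball in $\mathbb{R}^m\times\mathbb{R}^m$ with the Euclidean product norm. *)

theory Defs
  imports "HOL-Analysis.Analysis"
begin

definition proper_fun :: "('a \<Rightarrow> ereal) \<Rightarrow> bool" where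
  "proper_fun g \<longleftrightarrow> (\<forall>x. g x \<noteq> -\<infinity>) \<and> (\<exists>x. g x \<noteq> \<infinity>)"

definition epigraph :: "('a \<Rightarrow> ereal) \<Rightarrow> ('a \<times> real) set" where
  "epigraph g = {(x, t). g x \<le> ereal t}"

definition polyhedral_fun :: "('a::euclidean_space \<Rightarrow> ereal) \<Rightarrow> bool" where
  "polyhedral_fun g \<longleftrightarrow> proper_fun g \<and> polyhedron (epigraph g)"

definition subdiff :: "('a::real_inner \<Rightarrow> ereal) \<Rightarrow> 'a \<Rightarrow> 'a set" where
  "subdiff g z = {l. \<bar>g z\<bar> \<noteq> \<infinity> \<and> (\<forall>w. g w \<ge> g z + ereal (l \<bullet> (w - z)))}"

definition subderiv :: "('a::real_normed_vector \<Rightarrow> ereal) \<Rightarrow> 'a \<Rightarrow> 'a \<Rightarrow> ereal" where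
  "subderiv g z w = Liminf (at (0, w) within ({0<..} \<times> UNIV))
      (\<lambda>(t::real, w'). (g (z + t *\<^sub>R w') - g z) / ereal t)"

definition crit_cone :: "('a::real_inner \<Rightarrow> ereal) \<Rightarrow> 'a \<Rightarrow> 'a \<Rightarrow> 'a set" where
  "crit_cone g z l = {w. ereal (l \<bullet> w) = subderiv g z w}"

end

theory Submission
  imports Defs
begin

lemma rep:
  fixes g :: "'a::euclidean_space \<Rightarrow> ereal"
  assumes pg: "polyhedral_fun g"
  obtains I J :: "('a \<times> real) set set" and a c :: "('a \<times> real) set \<Rightarrow> 'a" and b d :: "('a \<times> real) set \<Rightarrow> real"
  where "finite I" "I \<noteq> {}" "finite J"
     "\<forall>x. g x = (if x \<in> {x. \<forall>j\<in>J. c j \<bullet> x \<le> d j} then ereal (Max ((\<lambda>i. a i \<bullet> x + b i) ` I)) else \<infinity>)"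
proof -
  have hprop: "proper_fun g" and ph: "polyhedron (epigraph g)" using pg unfolding polyhedral_fun_def by auto
  obtain F where F: "finite F" "epigraph g = \<Inter>F" "\<forall>h\<in>F. \<exists>u \<beta>. u \<noteq> 0 \<and> h = {x. u \<bullet> x \<le> \<beta>}"
    using ph unfolding polyhedron_def by blast
  obtain U B where UB: "\<forall>h\<in>F. h = {x. U h \<bullet> x \<le> B h}" using F(3) by metis
  define u where "u h = fst (U h)" for h
  define al where "al h = snd (U h)" for h
  have epi: "g x \<le> ereal t \<longleftrightarrow> (\<forall>h\<in>F. u h \<bullet> x + al h * t \<le> B h)" for x t
  proof -
    have "g x \<le> ereal t \<longleftrightarrow> (x, t) \<in> epigraph g" unfolding epigraph_def by simp
    also have "\<dots> \<longleftrightarrow> (\<forall>h\<in>F. (x, t) \<in> h)" using F(2) by auto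
    also have "\<dots> \<longleftrightarrow> (\<forall>h\<in>F. u h \<bullet> x + al h * t \<le> B h)"
    proof -
      have "(x, t) \<in> h \<longleftrightarrow> u h \<bullet> x + al h * t \<le> B h" if "h \<in> F" for h
      proof -
        have "(x, t) \<in> h \<longleftrightarrow> U h \<bullet> (x, t) \<le> B h" using UB that by blast
        also have "U h \<bullet> (x, t) = u h \<bullet> x + al h * t" unfolding u_def al_def inner_prod_def by (simp add: mult.commute)
        finally show ?thesis .
      qed
      then show ?thesis by auto
    qed
    finally show ?thesis .
  qed
  obtain x0 where x0: "g x0 \<noteq> \<infinity>" using hprop unfolding proper_fun_def by auto
  moreover have "g x0 \<noteq> - \<infinity>" using hprop unfolding proper_fun_def by auto
  ultimately obtain s0 where s0: "g x0 = ereal s0" by (cases "g x0") auto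
  have alle: "al h \<le> 0" if h: "h \<in> F" for h
  proof (rule ccontr)
    assume "\<not> al h \<le> 0"
    then have pos: "al h > 0" by simp
    define q where "q = B h - u h \<bullet> x0 - al h * s0"
    define t where "t = s0 + \<bar>q\<bar> / al h + 1"
    have "g x0 \<le> ereal t" using s0 pos unfolding t_def by simp
    then have "u h \<bullet> x0 + al h * t \<le> B h" using epi h by blast
    moreover have "al h * t = al h * s0 + \<bar>q\<bar> + al h" unfolding t_def using pos by (simp add: algebra_simps)
    ultimately show False using pos unfolding q_def by linarith
  qed
  define I where "I = {h\<in>F. al h < 0}"
  define J where "J = {h\<in>F. al h = 0}"
  define a where "a h = (- 1 / al h) *\<^sub>R u h" for h
  define b where "b h = B h / al h" for h
  have FIJ: "F = I \<union> J" unfolding I_def J_def using alle by force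
  have Ieq: "u h \<bullet> x + al h * t \<le> B h \<longleftrightarrow> a h \<bullet> x + b h \<le> t" if h: "h \<in> I" for h x t
  proof -
    have n: "al h < 0" using h unfolding I_def by auto
    have "a h \<bullet> x + b h = (B h - u h \<bullet> x) / al h" unfolding a_def b_def by (simp add: diff_divide_distrib)
    then show ?thesis using n by (simp add: divide_le_eq algebra_simps)
  qed
  have Jeq: "u h \<bullet> x + al h * t \<le> B h \<longleftrightarrow> u h \<bullet> x \<le> B h" if h: "h \<in> J" for h x t
    using h unfolding J_def by auto
  have char: "g x \<le> ereal t \<longleftrightarrow> (\<forall>j\<in>J. u j \<bullet> x \<le> B j) \<and> (\<forall>i\<in>I. a i \<bullet> x + b i \<le> t)" for x t
    unfolding epi FIJ using Ieq Jeq by blast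
  have finI: "finite I" "finite J" using F(1) unfolding I_def J_def by auto
  have neI: "I \<noteq> {}"
  proof
    assume "I = {}"
    have "g x0 \<le> ereal s0" using s0 by simp
    then have "\<forall>j\<in>J. u j \<bullet> x0 \<le> B j" using char by blast
    then have "g x0 \<le> ereal (s0 - 1)" using char \<open>I = {}\<close> by blast
    then show False using s0 by simp
  qed
  have geq0: "g x = (if x \<in> {x. \<forall>j\<in>J. u j \<bullet> x \<le> B j} then ereal (Max ((\<lambda>i. a i \<bullet> x + b i) ` I)) else \<infinity>)" for x
  proof (cases "x \<in> {x. \<forall>j\<in>J. u j \<bullet> x \<le> B j}")
    case True
    define M where "M = Max ((\<lambda>i. a i \<bullet> x + b i) ` I)"
    have "\<forall>i\<in>I. a i \<bullet> x + b i \<le> M" unfolding M_def using finI by auto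
    then have le: "g x \<le> ereal M" using char True by auto
    have "g x \<noteq> - \<infinity>" using hprop unfolding proper_fun_def by auto
    then obtain s where s: "g x = ereal s" using le by (cases "g x") auto
    then have "g x \<le> ereal s" by simp
    then have "\<forall>i\<in>I. a i \<bullet> x + b i \<le> s" using char by blast
    then have "M \<le> s" unfolding M_def using finI neI by auto
    then show ?thesis using le s True M_def by auto
  next
    case False
    have "g x \<noteq> - \<infinity>" using hprop unfolding proper_fun_def by auto
    moreover have "g x \<noteq> ereal s" for s using char[of x s] False by auto
    ultimately have "g x = \<infinity>" by (cases "g x") auto
    then show ?thesis using False by simp
  qed
  then have geq: "\<forall>x. g x = (if x \<in> {x. \<forall>j\<in>J. u j \<bullet> x \<le> B j} then ereal (Max ((\<lambda>i. a i \<bullet> x + b i) ` I)) else \<infinity>)"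
    by blast
  show ?thesis by (rule that[OF finI(1) neI finI(2) geq])
qed

locale prep =
  fixes I J :: "'i set" and a c :: "'i \<Rightarrow> 'a::euclidean_space" and b d :: "'i \<Rightarrow> real"
  assumes finI: "finite I" and neI: "I \<noteq> {}" and finJ: "finite J"
begin

definition D where "D = {x. \<forall>j\<in>J. c j \<bullet> x \<le> d j}"
definition G where "G x = Max ((\<lambda>i. a i \<bullet> x + b i) ` I)"
definition gg where "gg x = (if x \<in> D then ereal (G x) else \<infinity>)"
definition A where "A z = {i\<in>I. a i \<bullet> z + b i = G z}"
definition C where "C z = {j\<in>J. c j \<bullet> z = d j}"
definition T where "T z = {w. \<forall>j\<in>C z. c j \<bullet> w \<le> 0}"
definition phi where "phi z w = Max ((\<lambda>i. a i \<bullet> w) ` A z)"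

lemma G_ge: "i \<in> I \<Longrightarrow> a i \<bullet> x + b i \<le> G x"
  unfolding G_def using finI by (intro Max_ge) auto

lemma A_fin: "finite (A z)" using finI unfolding A_def by auto

lemma A_ne: "A z \<noteq> {}"
proof -
  have "G z \<in> (\<lambda>i. a i \<bullet> z + b i) ` I" unfolding G_def using finI neI by (intro Max_in) auto
  then show ?thesis unfolding A_def by auto
qed

lemma A_sub: "A z \<subseteq> I" unfolding A_def by auto

lemma phi_ge: "i \<in> A z \<Longrightarrow> a i \<bullet> w \<le> phi z w"
  unfolding phi_def using A_fin by (intro Max_ge) auto

lemma phi_ex: "\<exists>i\<in>A z. a i \<bullet> w = phi z w"
proof -
  have "phi z w \<in> (\<lambda>i. a i \<bullet> w) ` A z" unfolding phi_def using A_fin A_ne by (intro Max_in) auto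
  then show ?thesis by auto
qed

lemma phi_le: "(\<And>i. i \<in> A z \<Longrightarrow> a i \<bullet> w \<le> m) \<Longrightarrow> phi z w \<le> m"
  using phi_ex[of z w] by metis

lemma gg_ge: "i \<in> I \<Longrightarrow> ereal (a i \<bullet> y + b i) \<le> gg y"
  unfolding gg_def using G_ge by auto

lemma ev_dir:
  assumes z: "z \<in> D" and w: "w \<in> T z"
  shows "eventually (\<lambda>t. 0 < t \<and> z + t *\<^sub>R w \<in> D \<and> G (z + t *\<^sub>R w) \<le> G z + t * phi z w) (at_right (0::real))"
proof -
  have e1: "eventually (\<lambda>t. c j \<bullet> (z + t *\<^sub>R w) \<le> d j) (at_right (0::real))" if j: "j \<in> J" for j
  proof (cases "j \<in> C z")
    case True
    then have cz: "c j \<bullet> z = d j" and cw: "c j \<bullet> w \<le> 0" using w unfolding C_def T_def by auto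
    show ?thesis using eventually_at_right_less[of "0::real"]
      by (rule eventually_mono) (simp add: inner_add_right cz cw mult_nonneg_nonpos)
  next
    case False
    then have lt: "c j \<bullet> z < d j" using z j unfolding C_def D_def by force
    have "((\<lambda>t. c j \<bullet> z + t * (c j \<bullet> w)) \<longlongrightarrow> c j \<bullet> z + 0 * (c j \<bullet> w)) (at_right (0::real))"
      by (intro tendsto_intros)
    then have "eventually (\<lambda>t. c j \<bullet> z + t * (c j \<bullet> w) < d j) (at_right (0::real))"
      using lt by (intro order_tendstoD) auto
    then show ?thesis by eventually_elim (auto simp: inner_add_right)
  qed
  have e2: "eventually (\<lambda>t. 0 < t \<longrightarrow> a i \<bullet> (z + t *\<^sub>R w) + b i \<le> G z + t * phi z w) (at_right (0::real))" if i: "i \<in> I" for i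
  proof (cases "i \<in> A z")
    case True
    then have h1: "a i \<bullet> z + b i = G z" and h2: "a i \<bullet> w \<le> phi z w" using phi_ge unfolding A_def by auto
    show ?thesis
    proof (intro always_eventually allI impI)
      fix t :: real assume "0 < t"
      then have "t * (a i \<bullet> w) \<le> t * phi z w" using h2 by (intro mult_left_mono) auto
      then show "a i \<bullet> (z + t *\<^sub>R w) + b i \<le> G z + t * phi z w" using h1 by (simp add: inner_add_right)
    qed
  next
    case False
    then have lt: "a i \<bullet> z + b i < G z" using G_ge[OF i, of z] i unfolding A_def by force
    have "((\<lambda>t. a i \<bullet> z + b i + t * (a i \<bullet> w) - t * phi z w) \<longlongrightarrow> a i \<bullet> z + b i + 0 * (a i \<bullet> w) - 0 * phi z w) (at_right (0::real))"
      by (intro tendsto_intros)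
    then have "eventually (\<lambda>t. a i \<bullet> z + b i + t * (a i \<bullet> w) - t * phi z w < G z) (at_right (0::real))"
      using lt by (intro order_tendstoD) auto
    then show ?thesis by eventually_elim (auto simp: inner_add_right)
  qed
  have "eventually (\<lambda>t. \<forall>j\<in>J. c j \<bullet> (z + t *\<^sub>R w) \<le> d j) (at_right (0::real))"
    using e1 by (intro eventually_ball_finite finJ) auto
  moreover have "eventually (\<lambda>t. \<forall>i\<in>I. 0 < t \<longrightarrow> a i \<bullet> (z + t *\<^sub>R w) + b i \<le> G z + t * phi z w) (at_right (0::real))"
    using e2 by (intro eventually_ball_finite finI) auto
  moreover note eventually_at_right_less[of "0::real"]
  ultimately show ?thesis
  proof eventually_elim
    case (elim t)
    have "G (z + t *\<^sub>R w) \<le> G z + t * phi z w"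
      unfolding G_def[of "z + t *\<^sub>R w"] using finI neI elim by (subst Max_le_iff) auto
    then show ?case using elim unfolding D_def by auto
  qed
qed

lemma subdiff_char: "subdiff gg z = {l. z \<in> D \<and> (\<forall>w\<in>T z. l \<bullet> w \<le> phi z w)}"
proof (intro set_eqI iffI)
  fix l assume l: "l \<in> subdiff gg z"
  then have z: "z \<in> D" unfolding subdiff_def gg_def by (auto split: if_splits)
  have "l \<bullet> w \<le> phi z w" if w: "w \<in> T z" for w
  proof -
    obtain t where t: "0 < t" "z + t *\<^sub>R w \<in> D" "G (z + t *\<^sub>R w) \<le> G z + t * phi z w"
      using eventually_happens'[OF _ ev_dir[OF z w]] by auto
    have "\<forall>y. gg y \<ge> gg z + ereal (l \<bullet> (y - z))"
      using l unfolding subdiff_def by blast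
    then have "gg (z + t *\<^sub>R w) \<ge> gg z + ereal (l \<bullet> (z + t *\<^sub>R w - z))" by blast
    then have "G z + t * (l \<bullet> w) \<le> G (z + t *\<^sub>R w)" using z t unfolding gg_def by auto
    with t have "t * (l \<bullet> w) \<le> t * phi z w" by linarith
    with t show ?thesis by simp
  qed
  with z show "l \<in> {l. z \<in> D \<and> (\<forall>w\<in>T z. l \<bullet> w \<le> phi z w)}" by auto
next
  fix l assume "l \<in> {l. z \<in> D \<and> (\<forall>w\<in>T z. l \<bullet> w \<le> phi z w)}"
  then have z: "z \<in> D" and l: "\<And>w. w \<in> T z \<Longrightarrow> l \<bullet> w \<le> phi z w" by auto
  have "gg y \<ge> gg z + ereal (l \<bullet> (y - z))" for y
  proof (cases "y \<in> D")
    case False then show ?thesis unfolding gg_def by simp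
  next
    case True
    have "y - z \<in> T z" using True unfolding T_def C_def D_def by (auto simp: inner_diff_right)
    then have 1: "l \<bullet> (y - z) \<le> phi z (y - z)" by (rule l)
    obtain i where i: "i \<in> A z" "a i \<bullet> (y - z) = phi z (y - z)" using phi_ex by blast
    then have "a i \<bullet> y + b i = G z + phi z (y - z)" unfolding A_def by (auto simp: inner_diff_right)
    moreover have "a i \<bullet> y + b i \<le> G y" using i A_sub G_ge by blast
    ultimately show ?thesis using True z 1 unfolding gg_def by simp
  qed
  then show "l \<in> subdiff gg z" unfolding subdiff_def gg_def using z by auto
qed

lemma fval:
  assumes z: "z \<in> D" and t: "0 < t"
  shows "(gg (z + t *\<^sub>R w') - gg z) / ereal t =
    (if z + t *\<^sub>R w' \<in> D then ereal ((G (z + t *\<^sub>R w') - G z) / t) else \<infinity>)"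
  using z t unfolding gg_def by auto

lemma subderiv_char:
  assumes z: "z \<in> D"
  shows "subderiv gg z w = (if w \<in> T z then ereal (phi z w) else \<infinity>)"
proof -
  define F where "F = at (0::real, w) within ({0<..} \<times> UNIV)"
  define f where "f = (\<lambda>(t::real, w'). (gg (z + t *\<^sub>R w') - gg z) / ereal t)"
  have sd: "subderiv gg z w = Liminf F f" unfolding subderiv_def F_def f_def by simp
  have evpos: "eventually (\<lambda>p. 0 < fst p) F"
    unfolding F_def eventually_at_filter by (intro always_eventually allI impI) (auto simp: mem_Times_iff)
  have tsnd: "((\<lambda>p. snd p) \<longlongrightarrow> w) F"
    proof -
    have "((\<lambda>p. snd p) \<longlongrightarrow> snd (0::real, w)) F" unfolding F_def by (intro tendsto_snd tendsto_ident_at)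
    then show ?thesis by simp
  qed
  have path: "filterlim (\<lambda>t. (t, w)) F (at_right 0)"
    unfolding F_def filterlim_at
  proof
    show "\<forall>\<^sub>F x in at_right 0. (x, w) \<in> {0<..} \<times> UNIV \<and> (x, w) \<noteq> (0, w)"
      unfolding eventually_at_filter by (intro always_eventually allI impI) auto
    show "((\<lambda>t. (t, w)) \<longlongrightarrow> (0, w)) (at_right 0)"
      by (intro tendsto_Pair tendsto_ident_at tendsto_const)
  qed
  have nbr: "at_right (0::real) \<noteq> bot" by (rule trivial_limit_at_right_real)
  have Fnb: "F \<noteq> bot"
  proof
    assume "F = bot"
    then have "eventually (\<lambda>_. False) F" by simp
    then have "eventually (\<lambda>_. False) (at_right (0::real))"
      using path unfolding filterlim_iff by blast
    then show False by (simp add: trivial_limit_at_right_real)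
  qed
  show ?thesis
  proof (cases "w \<in> T z")
    case True
    have ge: "ereal (phi z w) \<le> Liminf F f"
      unfolding le_Liminf_iff
    proof (intro allI impI)
      fix y assume y: "y < ereal (phi z w)"
      obtain i where i: "i \<in> A z" "a i \<bullet> w = phi z w" using phi_ex by blast
      have "((\<lambda>p. ereal (a i \<bullet> snd p)) \<longlongrightarrow> ereal (a i \<bullet> w)) F"
        by (intro tendsto_ereal tendsto_inner tendsto_const tsnd)
      then have "eventually (\<lambda>p. y < ereal (a i \<bullet> snd p)) F"
        using y i by (intro order_tendstoD) auto
      then show "eventually (\<lambda>p. y < f p) F"
        using evpos
      proof eventually_elim
        case (elim p)
        obtain t w' where p: "p = (t, w')" by force
        have t: "0 < t" using elim p by auto
        have "ereal (a i \<bullet> w') \<le> f p"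
        proof (cases "z + t *\<^sub>R w' \<in> D")
          case False then show ?thesis using fval[OF z t] p f_def by simp
        next
          case True
          have "a i \<bullet> (z + t *\<^sub>R w') + b i \<le> G (z + t *\<^sub>R w')" using i A_sub G_ge by blast
          moreover have "a i \<bullet> z + b i = G z" using i unfolding A_def by auto
          ultimately have "t * (a i \<bullet> w') \<le> G (z + t *\<^sub>R w') - G z" by (simp add: inner_add_right)
          then have "a i \<bullet> w' \<le> (G (z + t *\<^sub>R w') - G z) / t" using t by (simp add: pos_le_divide_eq mult.commute)
          then show ?thesis using fval[OF z t] p f_def True by simp
        qed
        then show ?case using elim p by auto
      qed
    qed
    have le: "Liminf F f \<le> ereal (phi z w)"
      unfolding Liminf_def
    proof (rule SUP_least)
      fix P assume "P \<in> {P. eventually P F}"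
      then have "eventually P F" by simp
      then have "eventually (\<lambda>t. P (t, w)) (at_right 0)" using path unfolding filterlim_iff by blast
      then have "eventually (\<lambda>t. P (t, w) \<and> (0 < t \<and> z + t *\<^sub>R w \<in> D \<and> G (z + t *\<^sub>R w) \<le> G z + t * phi z w)) (at_right 0)"
        using ev_dir[OF z True] by (rule eventually_conj)
      then obtain t where t: "P (t, w)" "0 < t" "z + t *\<^sub>R w \<in> D" "G (z + t *\<^sub>R w) \<le> G z + t * phi z w"
        using eventually_happens'[OF nbr] by blast
      have "(G (z + t *\<^sub>R w) - G z) / t \<le> phi z w" using t by (simp add: pos_divide_le_eq mult.commute)
      then have "f (t, w) \<le> ereal (phi z w)" using fval[OF z t(2)] t f_def by simp
      then show "Inf (f ` Collect P) \<le> ereal (phi z w)" using t(1) by (intro INF_lower2) auto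
    qed
    show ?thesis using True ge le sd by simp
  next
    case False
    then obtain j where j: "j \<in> C z" "c j \<bullet> w > 0" unfolding T_def by force
    have "\<infinity> \<le> Liminf F f"
      unfolding le_Liminf_iff
    proof (intro allI impI)
      fix y :: ereal assume y: "y < \<infinity>"
      have "((\<lambda>p. c j \<bullet> snd p) \<longlongrightarrow> c j \<bullet> w) F" by (intro tendsto_inner tendsto_const tsnd)
      then have "eventually (\<lambda>p. 0 < c j \<bullet> snd p) F" using j by (intro order_tendstoD) auto
      then show "eventually (\<lambda>p. y < f p) F" using evpos
      proof eventually_elim
        case (elim p)
        obtain t w' where p: "p = (t, w')" by force
        have t: "0 < t" using elim p by auto
        have "c j \<bullet> (z + t *\<^sub>R w') > d j" using j elim p t unfolding C_def by (simp add: inner_add_right)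
        then have "z + t *\<^sub>R w' \<notin> D" using j unfolding D_def C_def by force
        then show ?case using fval[OF z t] p f_def y by simp
      qed
    qed
    then show ?thesis using False sd by simp
  qed
qed

lemma crit_char:
  assumes z: "z \<in> D"
  shows "crit_cone gg z l = {w \<in> T z. l \<bullet> w = phi z w}"
  unfolding crit_cone_def subderiv_char[OF z] by auto

lemma C_fin: "finite (C z)" using finJ unfolding C_def by auto

lemma near:
  assumes zb: "zb \<in> D"
  shows "eventually (\<lambda>z. A z \<subseteq> A zb \<and> C z \<subseteq> C zb) (nhds zb)"
proof -
  obtain k where k: "k \<in> A zb" using A_ne by blast
  have e1: "eventually (\<lambda>z. i \<notin> A z) (nhds zb)" if i: "i \<in> I - A zb" for i
  proof -
    have "a i \<bullet> zb + b i < G zb" using i G_ge[of i zb] unfolding A_def by force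
    then have pos: "0 < (a k \<bullet> zb + b k) - (a i \<bullet> zb + b i)" using k unfolding A_def by auto
    have "((\<lambda>z. (a k \<bullet> z + b k) - (a i \<bullet> z + b i)) \<longlongrightarrow> (a k \<bullet> zb + b k) - (a i \<bullet> zb + b i)) (nhds zb)"
      by (intro tendsto_intros filterlim_ident)
    then have "eventually (\<lambda>z. 0 < (a k \<bullet> z + b k) - (a i \<bullet> z + b i)) (nhds zb)"
      using pos by (intro order_tendstoD) auto
    then show ?thesis
    proof eventually_elim
      case (elim z)
      have "a k \<bullet> z + b k \<le> G z" using k A_sub G_ge by blast
      then show ?case using elim unfolding A_def by auto
    qed
  qed
  have e2: "eventually (\<lambda>z. j \<notin> C z) (nhds zb)" if j: "j \<in> J - C zb" for j
  proof -
    have lt: "c j \<bullet> zb < d j" using j zb unfolding D_def C_def by force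
    have "((\<lambda>z. c j \<bullet> z) \<longlongrightarrow> c j \<bullet> zb) (nhds zb)"
      by (intro tendsto_intros filterlim_ident)
    then have "eventually (\<lambda>z. c j \<bullet> z < d j) (nhds zb)"
      using lt by (intro order_tendstoD) auto
    then show ?thesis by eventually_elim (auto simp: C_def)
  qed
  have "eventually (\<lambda>z. \<forall>i\<in>I - A zb. i \<notin> A z) (nhds zb)"
    using e1 finI by (intro eventually_ball_finite) auto
  moreover have "eventually (\<lambda>z. \<forall>j\<in>J - C zb. j \<notin> C z) (nhds zb)"
    using e2 finJ by (intro eventually_ball_finite) auto
  ultimately show ?thesis
    by eventually_elim (auto simp: A_def C_def)
qed

context
  fixes zb z
  assumes zbD: "zb \<in> D" and zD: "z \<in> D" and Asub: "A z \<subseteq> A zb" and Csub: "C z \<subseteq> C zb"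
begin

lemma Aval: "i \<in> A zb \<Longrightarrow> a i \<bullet> z + b i = G zb + a i \<bullet> (z - zb)"
  unfolding A_def by (auto simp: inner_diff_right)

lemma L2: "G z = G zb + phi zb (z - zb)"
proof -
  obtain i0 where i0: "i0 \<in> A z" using A_ne by blast
  then have "G z = G zb + a i0 \<bullet> (z - zb)" using Aval[of i0] Asub unfolding A_def by auto
  moreover have "a i0 \<bullet> (z - zb) \<le> phi zb (z - zb)" using i0 Asub phi_ge by blast
  moreover obtain i1 where i1: "i1 \<in> A zb" "a i1 \<bullet> (z - zb) = phi zb (z - zb)" using phi_ex by blast
  moreover have "a i1 \<bullet> z + b i1 \<le> G z" using i1 A_sub G_ge by blast
  ultimately show ?thesis using Aval[of i1] by auto
qed

lemma L3: "i \<in> A zb \<Longrightarrow> (i \<in> A z \<longleftrightarrow> a i \<bullet> (z - zb) = phi zb (z - zb))"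
  using Aval[of i] L2 A_sub unfolding A_def[of z] by auto

lemma LC1: "j \<in> C zb \<Longrightarrow> (j \<in> C z \<longleftrightarrow> c j \<bullet> (z - zb) = 0)"
  unfolding C_def by (auto simp: inner_diff_right)

lemma LC2: "j \<in> C zb \<Longrightarrow> c j \<bullet> (z - zb) \<le> 0"
  using zD unfolding C_def D_def by (auto simp: inner_diff_right)

lemma Tsub: "T zb \<subseteq> T z"
  using Csub unfolding T_def by auto

lemma phi_mono: "phi z w \<le> phi zb w"
  unfolding phi_def using Asub A_ne A_fin by (intro Max_mono) auto

lemma sub_mono: "subdiff gg z \<subseteq> subdiff gg zb"
  unfolding subdiff_char using zbD Tsub phi_mono by (auto intro: order_trans)

lemma d_in:
  assumes l: "l \<in> subdiff gg z"
  shows "z - zb \<in> T zb" "l \<bullet> (z - zb) = phi zb (z - zb)"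
proof -
  show dT: "z - zb \<in> T zb" using LC2 unfolding T_def by auto
  have "l \<in> subdiff gg zb" using l sub_mono by auto
  then have 1: "l \<bullet> (z - zb) \<le> phi zb (z - zb)" using dT unfolding subdiff_char by auto
  have "zb - z \<in> T z" using zbD unfolding T_def C_def D_def by (auto simp: inner_diff_right)
  then have "l \<bullet> (zb - z) \<le> phi z (zb - z)" using l unfolding subdiff_char by auto
  moreover have "phi z (zb - z) \<le> - phi zb (z - zb)"
  proof (rule phi_le)
    fix i assume "i \<in> A z"
    then have "a i \<bullet> (z - zb) = phi zb (z - zb)" using L3 Asub by blast
    then show "a i \<bullet> (zb - z) \<le> - phi zb (z - zb)" by (simp add: inner_diff_right)
  qed
  ultimately have "- (l \<bullet> (z - zb)) \<le> - phi zb (z - zb)" by (simp add: inner_diff_right)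
  with 1 show "l \<bullet> (z - zb) = phi zb (z - zb)" by linarith
qed

lemma dtrick:
  assumes l: "l \<in> subdiff gg z" and w: "w \<in> T z" and lw: "l \<bullet> w = phi z w"
  shows "eventually (\<lambda>s. w + s *\<^sub>R (z - zb) \<in> T zb \<and>
           l \<bullet> (w + s *\<^sub>R (z - zb)) = phi zb (w + s *\<^sub>R (z - zb))) at_top"
proof -
  define dd where "dd = z - zb"
  have ev1: "eventually (\<lambda>s::real. c j \<bullet> w + s * (c j \<bullet> dd) \<le> 0) at_top" if j: "j \<in> C zb" for j
  proof (cases "j \<in> C z")
    case True
    then have "c j \<bullet> w \<le> 0" "c j \<bullet> dd = 0" using w LC1[OF j] unfolding T_def dd_def by auto
    then show ?thesis by simp
  next
    case False
    then have neg: "c j \<bullet> dd < 0" using LC1[OF j] LC2[OF j] unfolding dd_def by force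
    show ?thesis using eventually_ge_at_top[of "c j \<bullet> w / (- (c j \<bullet> dd))"]
    proof eventually_elim
      case (elim s)
      have "0 < - (c j \<bullet> dd)" using neg by simp
      from pos_divide_le_eq[OF this] elim have "c j \<bullet> w \<le> s * (- (c j \<bullet> dd))" by blast
      then show ?case by simp
    qed
  qed
  have ev2: "eventually (\<lambda>s::real. 0 \<le> s \<longrightarrow> a i \<bullet> w + s * (a i \<bullet> dd) \<le> phi z w + s * phi zb dd) at_top"
    if i: "i \<in> A zb" for i
  proof (cases "i \<in> A z")
    case True
    then have "a i \<bullet> w \<le> phi z w" "a i \<bullet> dd = phi zb dd" using phi_ge L3[OF i] unfolding dd_def by auto
    then show ?thesis by simp
  next
    case False
    then have "a i \<bullet> dd \<noteq> phi zb dd" using L3[OF i] unfolding dd_def by auto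
    then have lt: "a i \<bullet> dd < phi zb dd" using phi_ge[OF i, of dd] by linarith
    show ?thesis using eventually_ge_at_top[of "(a i \<bullet> w - phi z w) / (phi zb dd - a i \<bullet> dd)"]
    proof eventually_elim
      case (elim s)
      have "0 < phi zb dd - a i \<bullet> dd" using lt by simp
      from pos_divide_le_eq[OF this] elim have "a i \<bullet> w - phi z w \<le> s * (phi zb dd - a i \<bullet> dd)" by blast
      then show ?case by (simp add: algebra_simps)
    qed
  qed
  have "eventually (\<lambda>s::real. \<forall>j\<in>C zb. c j \<bullet> w + s * (c j \<bullet> dd) \<le> 0) at_top"
    using ev1 C_fin by (intro eventually_ball_finite) auto
  moreover have "eventually (\<lambda>s::real. \<forall>i\<in>A zb. 0 \<le> s \<longrightarrow> a i \<bullet> w + s * (a i \<bullet> dd) \<le> phi z w + s * phi zb dd) at_top"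
    using ev2 A_fin by (intro eventually_ball_finite) auto
  moreover note eventually_ge_at_top[of "0::real"]
  ultimately show ?thesis
  proof eventually_elim
    case (elim s)
    have vT: "w + s *\<^sub>R dd \<in> T zb" using elim(1) unfolding T_def by (simp add: inner_add_right)
    have "l \<in> subdiff gg zb" using l sub_mono by auto
    then have 1: "l \<bullet> (w + s *\<^sub>R dd) \<le> phi zb (w + s *\<^sub>R dd)" using vT unfolding subdiff_char by auto
    have "phi zb (w + s *\<^sub>R dd) \<le> phi z w + s * phi zb dd"
      using elim(2,3) by (intro phi_le) (simp add: inner_add_right)
    also have "\<dots> = l \<bullet> (w + s *\<^sub>R dd)" using lw d_in[OF l] unfolding dd_def by (simp add: inner_add_right)
    finally show ?case using 1 vT unfolding dd_def by simp
  qed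
qed

end


lemma S_convex: "convex (subdiff gg zb)"
proof (unfold convex_def, intro ballI allI impI)
  fix x y :: 'a and u v :: real
  assume x: "x \<in> subdiff gg zb" and y: "y \<in> subdiff gg zb"
    and u: "0 \<le> u" and v: "0 \<le> v" and uv: "u + v = 1"
  have zb: "zb \<in> D" using x unfolding subdiff_char by auto
  have "(u *\<^sub>R x + v *\<^sub>R y) \<bullet> w \<le> phi zb w" if w: "w \<in> T zb" for w
  proof -
    have "u * (x \<bullet> w) \<le> u * phi zb w" using x w u unfolding subdiff_char by (intro mult_left_mono) auto
    moreover have "v * (y \<bullet> w) \<le> v * phi zb w" using y w v unfolding subdiff_char by (intro mult_left_mono) auto
    ultimately have "u * (x \<bullet> w) + v * (y \<bullet> w) \<le> (u + v) * phi zb w" by (simp add: distrib_right)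
    then show ?thesis using uv by (simp add: inner_add_left)
  qed
  then show "u *\<^sub>R x + v *\<^sub>R y \<in> subdiff gg zb" unfolding subdiff_char using zb by auto
qed

lemma face_trick:
  assumes zb: "zb \<in> D"
  shows "eventually (\<lambda>l. l \<in> subdiff gg zb \<longrightarrow>
           {w \<in> T zb. l \<bullet> w = phi zb w} \<subseteq> {w \<in> T zb. lb \<bullet> w = phi zb w}) (nhds lb)"
proof -
  define E :: "('a \<times> real) set" where
    "E = \<Inter> ((\<lambda>j. {p. (c j, 0) \<bullet> p \<le> 0}) ` C zb \<union> (\<lambda>i. {p. (a i, -1) \<bullet> p \<le> 0}) ` A zb)"
  have Emem: "p \<in> E \<longleftrightarrow> (\<forall>j\<in>C zb. c j \<bullet> fst p \<le> 0) \<and> (\<forall>i\<in>A zb. a i \<bullet> fst p \<le> snd p)" for p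
    unfolding E_def by (auto simp: inner_prod_def)
  have polyE: "polyhedron E"
    unfolding E_def using C_fin A_fin by (intro polyhedron_Inter) (auto intro: polyhedron_halfspace_le)
  then have cE: "convex E" by (rule polyhedron_imp_convex)
  define NF where "NF F = {l. \<forall>p\<in>F. fst p \<bullet> l = snd p}" for F :: "('a \<times> real) set"
  have clNF: "closed (NF F)" for F
  proof -
    have "NF F = \<Inter> ((\<lambda>p. {l. fst p \<bullet> l = snd p}) ` F)" unfolding NF_def by auto
    then show ?thesis by (auto intro!: closed_Inter closed_hyperplane)
  qed
  have evF: "eventually (\<lambda>l. l \<in> NF F \<longrightarrow> lb \<in> NF F) (nhds lb)" for F
  proof (cases "lb \<in> NF F")
    case True then show ?thesis by simp
  next
    case False
    have "eventually (\<lambda>l. l \<in> - NF F) (nhds lb)"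
      using False clNF[of F] by (intro eventually_nhds_in_open) (auto simp: open_Compl)
    then show ?thesis by eventually_elim auto
  qed
  have "eventually (\<lambda>l. \<forall>F\<in>{F. F face_of E}. l \<in> NF F \<longrightarrow> lb \<in> NF F) (nhds lb)"
    using evF finite_polyhedron_faces[OF polyE] by (intro eventually_ball_finite) auto
  then show ?thesis
  proof eventually_elim
    case (elim l)
    show ?case
    proof (intro impI subsetI)
      assume lS: "l \<in> subdiff gg zb"
      have le: "(l, -1) \<bullet> p \<le> 0" if p: "p \<in> E" for p
      proof -
        have "fst p \<in> T zb" using p Emem unfolding T_def by auto
        then have "l \<bullet> fst p \<le> phi zb (fst p)" using lS unfolding subdiff_char by auto
        moreover have "phi zb (fst p) \<le> snd p" using p Emem by (intro phi_le) auto
        ultimately show ?thesis by (simp add: inner_prod_def)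
      qed
      define Fl where "Fl = E \<inter> {p. (l, -1) \<bullet> p = 0}"
      have "Fl face_of E" unfolding Fl_def using cE le by (intro face_of_Int_supporting_hyperplane_le) auto
      moreover have "l \<in> NF Fl" unfolding NF_def Fl_def by (auto simp: inner_prod_def inner_commute)
      ultimately have lbF: "lb \<in> NF Fl" using elim by auto
      fix w assume w: "w \<in> {w \<in> T zb. l \<bullet> w = phi zb w}"
      have "(w, phi zb w) \<in> E" using w Emem[of "(w, phi zb w)"] phi_ge unfolding T_def by auto
      then have "(w, phi zb w) \<in> Fl" using w unfolding Fl_def by auto
      then have "lb \<bullet> w = phi zb w" using lbF unfolding NF_def by (auto simp: inner_commute)
      then show "w \<in> {w \<in> T zb. lb \<bullet> w = phi zb w}" using w by auto
    qed
  qed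
qed

lemma ri_lemma:
  assumes zb: "zb \<in> D" and lb: "lb \<in> rel_interior (subdiff gg zb)"
    and w: "w \<in> T zb" and lw: "lb \<bullet> w = phi zb w"
  shows "\<forall>i\<in>A zb. a i \<bullet> w = lb \<bullet> w" "\<forall>j\<in>C zb. c j \<bullet> w = 0"
proof -
  have lbS: "lb \<in> subdiff gg zb" using lb rel_interior_subset by blast
  have key: "m \<bullet> w = lb \<bullet> w" if m: "m \<in> subdiff gg zb" for m
  proof -
    obtain e where e: "e > 1" "(1 - e) *\<^sub>R m + e *\<^sub>R lb \<in> subdiff gg zb"
      using lb m convex_rel_interior_iff[OF S_convex, of zb lb] by blast
    then have "((1 - e) *\<^sub>R m + e *\<^sub>R lb) \<bullet> w \<le> phi zb w" using w unfolding subdiff_char by auto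
    then have "(1 - e) * (m \<bullet> w) + e * (lb \<bullet> w) \<le> lb \<bullet> w" using lw by (simp add: inner_add_left)
    then have "(1 - e) * (m \<bullet> w - lb \<bullet> w) \<le> 0" by (simp add: algebra_simps)
    then have "m \<bullet> w - lb \<bullet> w \<ge> 0" using e(1) by (simp add: mult_le_0_iff)
    moreover have "m \<bullet> w \<le> phi zb w" using m w unfolding subdiff_char by auto
    ultimately show ?thesis using lw by linarith
  qed
  show "\<forall>i\<in>A zb. a i \<bullet> w = lb \<bullet> w"
  proof
    fix i assume i: "i \<in> A zb"
    have "a i \<in> subdiff gg zb" unfolding subdiff_char using zb phi_ge[OF i] by auto
    then show "a i \<bullet> w = lb \<bullet> w" by (rule key)
  qed
  show "\<forall>j\<in>C zb. c j \<bullet> w = 0"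
  proof
    fix j assume j: "j \<in> C zb"
    have "lb + c j \<in> subdiff gg zb" unfolding subdiff_char
    proof (intro CollectI conjI ballI)
      show "zb \<in> D" by (rule zb)
      fix v assume v: "v \<in> T zb"
      have "lb \<bullet> v \<le> phi zb v" using lbS v unfolding subdiff_char by auto
      moreover have "c j \<bullet> v \<le> 0" using v j unfolding T_def by auto
      ultimately show "(lb + c j) \<bullet> v \<le> phi zb v" by (simp add: inner_add_left)
    qed
    from key[OF this] show "c j \<bullet> w = 0" by (simp add: inner_add_left)
  qed
qed


lemma phi0: "phi z 0 = 0"
  using phi_ex[of z 0] by auto

lemma main:
  assumes lbS: "lb \<in> subdiff gg zb"
  shows "(\<exists>r>0. \<forall>z l. (z, l) \<in> cball (zb, lb) r \<and> l \<in> subdiff gg z \<longrightarrow>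
            crit_cone gg z l \<subseteq> {a - b | a b. a \<in> crit_cone gg zb lb \<and> b \<in> crit_cone gg zb lb} \<and>
            crit_cone gg zb lb \<inter> uminus ` crit_cone gg zb lb \<subseteq> crit_cone gg z l)
       \<and> (lb \<in> rel_interior (subdiff gg zb) \<longrightarrow>
          (\<exists>r>0. \<forall>z l. (z, l) \<in> cball (zb, lb) r \<and> l \<in> subdiff gg z \<longrightarrow>
            l \<in> rel_interior (subdiff gg z) \<and> crit_cone gg z l = crit_cone gg zb lb))"
proof -
  have zb: "zb \<in> D" using lbS unfolding subdiff_char by auto
  obtain r1 where r1: "r1 > 0" "\<And>z. dist z zb < r1 \<Longrightarrow> A z \<subseteq> A zb \<and> C z \<subseteq> C zb"
    using near[OF zb] unfolding eventually_nhds_metric by blast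
  obtain r2 where r2: "r2 > 0" "\<And>l. dist l lb < r2 \<Longrightarrow> l \<in> subdiff gg zb \<Longrightarrow>
      {w \<in> T zb. l \<bullet> w = phi zb w} \<subseteq> {w \<in> T zb. lb \<bullet> w = phi zb w}"
    using face_trick[OF zb, of lb] unfolding eventually_nhds_metric by blast
  have Kb: "crit_cone gg zb lb = {w \<in> T zb. lb \<bullet> w = phi zb w}" by (rule crit_char[OF zb])
  have dists: "dist z zb \<le> r" "dist l lb \<le> r" if "(z, l) \<in> cball (zb, lb) r" for z l r
  proof -
    have "dist (z, l) (zb, lb) \<le> r" using that by (simp add: dist_commute)
    then show "dist z zb \<le> r" "dist l lb \<le> r"
      using dist_fst_le[of "(z, l)" "(zb, lb)"] dist_snd_le[of "(z, l)" "(zb, lb)"] by auto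
  qed
  have partA: "\<exists>r>0. \<forall>z l. (z, l) \<in> cball (zb, lb) r \<and> l \<in> subdiff gg z \<longrightarrow>
            crit_cone gg z l \<subseteq> {a - b | a b. a \<in> crit_cone gg zb lb \<and> b \<in> crit_cone gg zb lb} \<and>
            crit_cone gg zb lb \<inter> uminus ` crit_cone gg zb lb \<subseteq> crit_cone gg z l"
  proof (intro exI[of _ "min r1 r2 / 2"] conjI allI impI)
    show "0 < min r1 r2 / 2" using r1 r2 by simp
    fix z l assume zl: "(z, l) \<in> cball (zb, lb) (min r1 r2 / 2) \<and> l \<in> subdiff gg z"
    then have l: "l \<in> subdiff gg z" by simp
    have z: "z \<in> D" using l unfolding subdiff_char by auto
    have dz: "dist z zb \<le> min r1 r2 / 2" "dist l lb \<le> min r1 r2 / 2" using dists[of z l "min r1 r2 / 2"] zl by auto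
    have "min r1 r2 \<le> r1" "min r1 r2 \<le> r2" by auto
    then have "dist z zb < r1" "dist l lb < r2" using dz r1(1) r2(1) by linarith+
    then have AC: "A z \<subseteq> A zb" "C z \<subseteq> C zb" using r1 by auto
    have lS: "l \<in> subdiff gg zb" using sub_mono[OF zb z AC] l by auto
    have face: "{w \<in> T zb. l \<bullet> w = phi zb w} \<subseteq> crit_cone gg zb lb"
      using r2(2)[OF \<open>dist l lb < r2\<close> lS] Kb by simp
    have Kz: "crit_cone gg z l = {w \<in> T z. l \<bullet> w = phi z w}" by (rule crit_char[OF z])
    show "crit_cone gg z l \<subseteq> {a - b | a b. a \<in> crit_cone gg zb lb \<and> b \<in> crit_cone gg zb lb}"
    proof
      fix w assume "w \<in> crit_cone gg z l"
      then have w: "w \<in> T z" "l \<bullet> w = phi z w" using Kz by auto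
      have 0: "0 \<in> T z" "l \<bullet> 0 = phi z 0" unfolding T_def by (auto simp: phi0)
      have "eventually (\<lambda>s. (w + s *\<^sub>R (z - zb) \<in> T zb \<and>
           l \<bullet> (w + s *\<^sub>R (z - zb)) = phi zb (w + s *\<^sub>R (z - zb))) \<and>
           (0 + s *\<^sub>R (z - zb) \<in> T zb \<and>
           l \<bullet> (0 + s *\<^sub>R (z - zb)) = phi zb (0 + s *\<^sub>R (z - zb)))) at_top"
        using dtrick[OF zb z AC l w] dtrick[OF zb z AC l 0] by (rule eventually_conj)
      then obtain s :: real where s: "w + s *\<^sub>R (z - zb) \<in> T zb"
           "l \<bullet> (w + s *\<^sub>R (z - zb)) = phi zb (w + s *\<^sub>R (z - zb))"
           "0 + s *\<^sub>R (z - zb) \<in> T zb"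
           "l \<bullet> (0 + s *\<^sub>R (z - zb)) = phi zb (0 + s *\<^sub>R (z - zb))"
        using eventually_happens'[OF trivial_limit_at_top_linorder] by blast
      have "w + s *\<^sub>R (z - zb) \<in> crit_cone gg zb lb" using face s by blast
      moreover have "s *\<^sub>R (z - zb) \<in> crit_cone gg zb lb" using face s by auto
      moreover have "w = (w + s *\<^sub>R (z - zb)) - s *\<^sub>R (z - zb)" by simp
      ultimately show "w \<in> {a - b | a b. a \<in> crit_cone gg zb lb \<and> b \<in> crit_cone gg zb lb}" by blast
    qed
    show "crit_cone gg zb lb \<inter> uminus ` crit_cone gg zb lb \<subseteq> crit_cone gg z l"
    proof
      fix w assume "w \<in> crit_cone gg zb lb \<inter> uminus ` crit_cone gg zb lb"
      then have w: "w \<in> T zb" "lb \<bullet> w = phi zb w" "- w \<in> T zb" "lb \<bullet> (- w) = phi zb (- w)"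
        using Kb by auto
      have cj: "c j \<bullet> w = 0" if "j \<in> C zb" for j
        using w(1,3) that unfolding T_def by force
      have ai: "a i \<bullet> w = lb \<bullet> w" if i: "i \<in> A zb" for i
        using phi_ge[OF i, of w] phi_ge[OF i, of "- w"] w(2,4) by simp
      have wz: "w \<in> T z" "- w \<in> T z" using cj AC unfolding T_def by auto
      have p1: "phi z w = lb \<bullet> w" using phi_ex[of z w] ai AC by auto
      have p2: "phi z (- w) = - (lb \<bullet> w)" using phi_ex[of z "- w"] ai AC by auto
      have "l \<bullet> w \<le> phi z w" "l \<bullet> (- w) \<le> phi z (- w)" using l wz unfolding subdiff_char by auto
      then have "l \<bullet> w = phi z w" using p1 p2 by simp
      then show "w \<in> crit_cone gg z l" using Kz wz by auto
    qed
  qed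
  have partB: "\<exists>r>0. \<forall>z l. (z, l) \<in> cball (zb, lb) r \<and> l \<in> subdiff gg z \<longrightarrow>
            l \<in> rel_interior (subdiff gg z) \<and> crit_cone gg z l = crit_cone gg zb lb"
    if ri: "lb \<in> rel_interior (subdiff gg zb)"
  proof -
    obtain e where e: "e > 0" "ball lb e \<inter> affine hull (subdiff gg zb) \<subseteq> subdiff gg zb"
      using ri unfolding mem_rel_interior_ball by blast
    show ?thesis
    proof (intro exI[of _ "min e (min r1 r2) / 4"] conjI allI impI)
      show "0 < min e (min r1 r2) / 4" using r1 r2 e by simp
      fix z l assume zl: "(z, l) \<in> cball (zb, lb) (min e (min r1 r2) / 4) \<and> l \<in> subdiff gg z"
      then have l: "l \<in> subdiff gg z" by simp
      have z: "z \<in> D" using l unfolding subdiff_char by auto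
      have dz: "dist z zb \<le> min e (min r1 r2) / 4" "dist l lb \<le> min e (min r1 r2) / 4"
        using dists[of z l "min e (min r1 r2) / 4"] zl by auto
      have "min e (min r1 r2) \<le> r1" "min e (min r1 r2) \<le> r2" "min e (min r1 r2) \<le> e" by auto
      then have "dist z zb < r1" "dist l lb < r2" "dist l lb < e / 2" using dz r1(1) r2(1) e(1) by linarith+
      then have AC: "A z \<subseteq> A zb" "C z \<subseteq> C zb" using r1 by auto
      have lS: "l \<in> subdiff gg zb" using sub_mono[OF zb z AC] l by auto
      have face: "{w \<in> T zb. l \<bullet> w = phi zb w} \<subseteq> {w \<in> T zb. lb \<bullet> w = phi zb w}"
        using r2(2)[OF \<open>dist l lb < r2\<close> lS] by simp
      have "z - zb \<in> T zb" "l \<bullet> (z - zb) = phi zb (z - zb)" using d_in[OF zb z AC l] by auto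
      then have dK: "z - zb \<in> T zb" "lb \<bullet> (z - zb) = phi zb (z - zb)" using face by auto
      have "A zb \<subseteq> A z"
      proof
        fix i assume i: "i \<in> A zb"
        then have "a i \<bullet> (z - zb) = phi zb (z - zb)" using ri_lemma(1)[OF zb ri dK] dK(2) by auto
        then show "i \<in> A z" using L3[OF zb z AC i] by simp
      qed
      then have Aeq: "A z = A zb" using AC by auto
      have "C zb \<subseteq> C z"
      proof
        fix j assume j: "j \<in> C zb"
        then have "c j \<bullet> (z - zb) = 0" using ri_lemma(2)[OF zb ri dK] by auto
        then show "j \<in> C z" using LC1[OF zb z AC j] by simp
      qed
      then have Ceq: "C z = C zb" using AC by auto
      have Teq: "T z = T zb" unfolding T_def Ceq ..
      have phieq: "phi z = phi zb" unfolding phi_def[abs_def] Aeq ..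
      have Seq: "subdiff gg z = subdiff gg zb" unfolding subdiff_char Teq phieq using z zb by auto
      have "l \<in> rel_interior (subdiff gg zb)"
        unfolding mem_rel_interior_ball
      proof (intro conjI exI[of _ "e / 2"])
        show "l \<in> subdiff gg zb" by (rule lS)
        show "0 < e / 2" using e by simp
        have "ball l (e / 2) \<subseteq> ball lb e"
        proof
          fix y assume "y \<in> ball l (e / 2)"
          then have "dist l y < e / 2" by simp
          moreover note \<open>dist l lb < e / 2\<close>
          ultimately have "dist lb y < e" using dist_triangle[of lb y l] by (simp add: dist_commute)
          then show "y \<in> ball lb e" by simp
        qed
        then show "ball l (e / 2) \<inter> affine hull subdiff gg zb \<subseteq> subdiff gg zb" using e by blast
      qed
      then show "l \<in> rel_interior (subdiff gg z)" using Seq by simp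
      show "crit_cone gg z l = crit_cone gg zb lb"
      proof
        show "crit_cone gg z l \<subseteq> crit_cone gg zb lb"
          using face unfolding crit_char[OF z] Kb Teq phieq by blast
        show "crit_cone gg zb lb \<subseteq> crit_cone gg z l"
        proof
          fix w assume "w \<in> crit_cone gg zb lb"
          then have w: "w \<in> T zb" "lb \<bullet> w = phi zb w" using Kb by auto
          have ai: "\<forall>i\<in>A zb. a i \<bullet> w = lb \<bullet> w" and cj: "\<forall>j\<in>C zb. c j \<bullet> w = 0"
            using ri_lemma[OF zb ri w] by auto
          have mw: "- w \<in> T zb" using cj unfolding T_def by auto
          have "phi zb (- w) \<le> - (lb \<bullet> w)" using ai by (intro phi_le) auto
          moreover have "l \<bullet> w \<le> phi zb w" "l \<bullet> (- w) \<le> phi zb (- w)" using lS w mw unfolding subdiff_char by auto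
          ultimately have "l \<bullet> w = phi zb w" using w(2) by simp
          then show "w \<in> crit_cone gg z l" unfolding crit_char[OF z] Teq phieq using w by auto
        qed
      qed
    qed
  qed
  show ?thesis using partA partB by blast
qed

end

theorem corollary3p4:
  fixes g :: "'a::euclidean_space \<Rightarrow> ereal" and zb lb :: 'a
  assumes "polyhedral_fun g" and "lb \<in> subdiff g zb"
  shows "(\<exists>r>0. \<forall>z l. (z, l) \<in> cball (zb, lb) r \<and> l \<in> subdiff g z \<longrightarrow>
            crit_cone g z l \<subseteq> {a - b | a b. a \<in> crit_cone g zb lb \<and> b \<in> crit_cone g zb lb} \<and>
            crit_cone g zb lb \<inter> uminus ` crit_cone g zb lb \<subseteq> crit_cone g z l)
       \<and> (lb \<in> rel_interior (subdiff g zb) \<longrightarrow>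
          (\<exists>r>0. \<forall>z l. (z, l) \<in> cball (zb, lb) r \<and> l \<in> subdiff g z \<longrightarrow>
            l \<in> rel_interior (subdiff g z) \<and> crit_cone g z l = crit_cone g zb lb))"
proof -
  obtain I J :: "('a \<times> real) set set" and a c :: "('a \<times> real) set \<Rightarrow> 'a" and b d :: "('a \<times> real) set \<Rightarrow> real" where
    R: "finite I" "I \<noteq> {}" "finite J"
       "\<forall>x. g x = (if x \<in> {x. \<forall>j\<in>J. c j \<bullet> x \<le> d j} then ereal (Max ((\<lambda>i. a i \<bullet> x + b i) ` I)) else \<infinity>)"
    by (rule rep[OF assms(1)])
  interpret P: prep I J a c b d using R(1-3) by unfold_locales
  have gg: "g = P.gg"
  proof
    fix x show "g x = P.gg x" unfolding P.gg_def P.D_def P.G_def by (rule R(4)[rule_format])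
  qed
  show ?thesis unfolding gg using P.main[OF assms(2)[unfolded gg]] .
qed

end
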